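(* Let $n,m,p,N\in\mathbb{N}_+$, $B\in\mathbb{R}^{n\times m}$, $C\in\mathbb{R}^{p\times n}$ of full column rank, $x_0\in\mathbb{R}^n$, $r_1,\dots,r_N\in\mathbb{R}^p$, $r_0:=Cx_0$, $\lambda_1,\lambda_2,\lambda_3\ge0$, functions $f_1,f_2,f_3$ and a set $\mathcal{S}\subseteq\mathbb{R}^{n\times n}\times\mathbb{R}^{m\times N}\times\mathbb{R}_+$. Consider problem (AMOPUL): minimize $\lambda_1f_1(A)+\lambda_2f_2(U)+\lambda_3f_3(\omega)$ over $A\in\mathbb{R}^{n\times n}$, $U=(u_0,\dots,u_{N-1})\in\mathbb{R}^{m\times N}$, $\omega\in\mathbb{R}_+$ subject to $\sum_{t=1}^N\|CAC^{\dagger}r_{t-1}+CBu_{t-1}-r_t\|_2\le\omega$ and $(A,U,\omega)\in\mathcal{S}$. Suppose there exist $\beta>0$ and $\omega^{\rm u}>0$ such that $\|CA^{\rm a}C^{\dagger}\|_2\le\beta$ and $\omega^{\rm a}\le\omega^{\rm u}$ for every feasible solution $(A^{\rm a},U^{\rm a},\omega^{\rm a})$ of (AMOPUL). Then for each optimal solution $(A^{\rm a*},U^{\rm a*},\omega^{\rm a*})$ of (AMOPUL), with $U^{\rm a*}=(u^{\rm a*}_0,\dots,u^{\rm a*}_{N-1})$, defining $x_t=A^{\rm a*}x_{t-1}+Bu^{\rm a*}_{t-1}$ and $y_t=Cx_t$ for $t=1,\dots,N$, we have $$\sum_{t=1}^N\|y_t-r_t\|_2\le\Big(\sum_{i=0}^{N-1}\beta^i\Big)\omega^{\rm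 u}.$$
   Context: $C^{\dagger}$ is the Moore–Penrose inverse of $C$; $\|\cdot\|_2$ denotes the Euclidean norm for vectors and the spectral norm (largest singular value) for matrices. In the paper $f_1,f_2,f_3$ and $\mathcal{S}$ are assumed SD representable (convex and expressible by linear matrix inequalities), though this is not used in the claim. *)

theory Defs
  imports "HOL-Analysis.Analysis"
begin

text \<open>Moore--Penrose inverse: the unique matrix X satisfying the four Penrose equations.\<close>
definition moore_penrose :: "real^'n^'p \<Rightarrow> real^'p^'n" where
  "moore_penrose C = (THE X. C ** X ** C = C \<and> X ** C ** X = X \<and>
      transpose (C ** X) = C ** X \<and> transpose (X ** C) = X ** C)"

text \<open>Spectral norm = operator norm induced by the Euclidean norm.\<close>
definition spec_norm :: "real^'n^'m \<Rightarrow> real" where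
  "spec_norm M = onorm (\<lambda>v. M *v v)"

text \<open>Problem (AMOPUL). U = (u_0,...,u_{N-1}) is a list of length N (U ! t = u_t).\<close>
definition amopul_feasible ::
  "nat \<Rightarrow> real^'m^'n \<Rightarrow> real^'n^'p \<Rightarrow> (nat \<Rightarrow> real^'p)
   \<Rightarrow> ((real^'n^'n) \<times> (real^'m) list \<times> real) set
   \<Rightarrow> real^'n^'n \<Rightarrow> (real^'m) list \<Rightarrow> real \<Rightarrow> bool" where
  "amopul_feasible N B C r S A U \<omega> \<longleftrightarrow>
     length U = N \<and> \<omega> \<ge> 0 \<and>
     (\<Sum>t=1..N. norm ((C ** A ** moore_penrose C) *v r (t-1) + (C ** B) *v (U ! (t-1)) - r t)) \<le> \<omega> \<and>
     (A, U, \<omega>) \<in> S"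

definition amopul_obj ::
  "real \<Rightarrow> real \<Rightarrow> real \<Rightarrow> (real^'n^'n \<Rightarrow> real) \<Rightarrow> ((real^'m) list \<Rightarrow> real) \<Rightarrow> (real \<Rightarrow> real)
   \<Rightarrow> real^'n^'n \<Rightarrow> (real^'m) list \<Rightarrow> real \<Rightarrow> real" where
  "amopul_obj l1 l2 l3 f1 f2 f3 A U \<omega> = l1 * f1 A + l2 * f2 U + l3 * f3 \<omega>"

definition amopul_optimal where
  "amopul_optimal N B C r S l1 l2 l3 f1 f2 f3 A U \<omega> \<longleftrightarrow>
     amopul_feasible N B C r S A U \<omega> \<and>
     (\<forall>A' U' \<omega>'. amopul_feasible N B C r S A' U' \<omega>' \<longrightarrow>
        amopul_obj l1 l2 l3 f1 f2 f3 A U \<omega> \<le> amopul_obj l1 l2 l3 f1 f2 f3 A' U' \<omega>')"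

text \<open>State trajectory x_0 = x0, x_t = A x_{t-1} + B u_{t-1}.\<close>
fun traj :: "real^'n^'n \<Rightarrow> real^'m^'n \<Rightarrow> (real^'m) list \<Rightarrow> real^'n \<Rightarrow> nat \<Rightarrow> real^'n" where
  "traj A B U x0 0 = x0"
| "traj A B U x0 (Suc t) = A *v traj A B U x0 t + B *v (U ! t)"

end

theory Submission
  imports Defs
begin

lemma seq_bound:
  fixes a b :: "nat \<Rightarrow> real" and \<beta> :: real
  assumes "\<beta> > 0" "\<forall>t. a (Suc t) \<le> \<beta> * a t + b (Suc t)" "\<forall>t. b t \<ge> 0"
  shows "(\<Sum>t=1..N. a t) \<le> (\<Sum>i<N. \<beta>^i) * (\<beta> * a 0 + (\<Sum>t=1..N. b t))"
  using assms(2,3)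
proof (induction N arbitrary: a b)
  case 0
  then show ?case by simp
next
  case (Suc N)
  define X where "X = \<beta> * a 0 + b 1"
  define R where "R = (\<Sum>t=1..N. b (Suc t))"
  define G where "G = (\<Sum>i<N. \<beta>^i)"
  have IH: "(\<Sum>t=1..N. a (Suc t)) \<le> G * (\<beta> * a 1 + R)"
    using Suc.IH[of "\<lambda>t. a (Suc t)" "\<lambda>t. b (Suc t)"] Suc.prems unfolding G_def R_def by simp
  have a1: "a 1 \<le> X" using Suc.prems(1)[rule_format, of 0] unfolding X_def by simp
  have G0: "G \<ge> 0" unfolding G_def using assms(1) by (simp add: sum_nonneg)
  have R0: "R \<ge> 0" unfolding R_def using Suc.prems(2) by (simp add: sum_nonneg)
  have sa0: "(\<Sum>t=1..Suc N. a t) = a 1 + (\<Sum>t=Suc 1..Suc N. a t)"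
    by (rule sum.atLeast_Suc_atMost) simp
  have sa: "(\<Sum>t=1..Suc N. a t) = a 1 + (\<Sum>t=1..N. a (Suc t))"
    unfolding sa0 sum.shift_bounds_cl_Suc_ivl by simp
  have sb0: "(\<Sum>t=1..Suc N. b t) = b 1 + (\<Sum>t=Suc 1..Suc N. b t)"
    by (rule sum.atLeast_Suc_atMost) simp
  have sb: "(\<Sum>t=1..Suc N. b t) = b 1 + R"
    unfolding R_def sb0 sum.shift_bounds_cl_Suc_ivl by simp
  have sg: "(\<Sum>i<Suc N. \<beta>^i) = 1 + \<beta> * G"
    unfolding G_def by (simp add: sum.lessThan_Suc_shift sum_distrib_left del: sum.lessThan_Suc)
  have "(\<Sum>i<Suc N. \<beta>^i) = G + \<beta>^N" unfolding G_def by simp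
  then have GG: "G \<le> 1 + \<beta> * G" using sg assms(1) zero_le_power[of \<beta> N] by linarith
  have GR: "G * R \<le> (1 + \<beta> * G) * R" using GG R0 by (rule mult_right_mono)
  have "G * (\<beta> * a 1 + R) \<le> G * (\<beta> * X + R)"
    using a1 G0 assms(1) by (intro mult_left_mono) auto
  then have "(\<Sum>t=1..Suc N. a t) \<le> X + G * (\<beta> * X + R)" using sa IH a1 by linarith
  also have "\<dots> \<le> (1 + \<beta> * G) * (X + R)"
    using GR by (simp add: algebra_simps)
  finally show ?case using sb sg unfolding X_def by (simp add: algebra_simps)
qed

lemma mp_left_inv:
  fixes C :: "real^'n^'p"
  assumes "rank C = CARD('n)"
  shows "moore_penrose C ** C = mat 1"
proof -
  have inj: "inj ((*v) C)" using full_rank_injective assms by blast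
  then obtain L where L: "L ** C = mat 1" using matrix_left_invertible_injective by blast
  define G where "G = transpose C ** C"
  have ker: "\<forall>v. G *v v = 0 \<longrightarrow> v = 0"
  proof (intro allI impI)
    fix v assume "G *v v = 0"
    have "inner (C *v v) (C *v v) = inner ((C *v v) v* C) v" by (simp add: dot_lmul_matrix)
    also have "\<dots> = inner (G *v v) v"
      by (metis G_def matrix_vector_mul_assoc transpose_matrix_vector)
    also have "\<dots> = 0" using \<open>G *v v = 0\<close> by simp
    finally have "C *v v = 0" by simp
    then show "v = 0" using inj by (metis L matrix_vector_mul_assoc matrix_vector_mul_lid matrix_vector_mult_0_right)
  qed
  then obtain H where HG: "H ** G = mat 1" using matrix_left_invertible_ker by blast
  then have GH: "G ** H = mat 1" using matrix_left_right_inverse by blast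
  have GT: "transpose G = G" unfolding G_def by (simp add: matrix_transpose_mul)
  have "transpose H ** G = mat 1"
    by (metis GH GT matrix_transpose_mul transpose_mat)
  then have HT: "transpose H = H"
    by (metis GH matrix_mul_assoc matrix_mul_lid matrix_mul_rid)
  define X0 where "X0 = H ** transpose C"
  define P where "P = (\<lambda>X. C ** X ** C = C \<and> X ** C ** X = X \<and>
      transpose (C ** X) = C ** X \<and> transpose (X ** C) = X ** C)"
  have lc: "X ** C = mat 1" if "P X" for X
  proof -
    have "X ** C = L ** (C ** X ** C)" using L that unfolding P_def
      by (metis matrix_mul_assoc matrix_mul_lid)
    then show ?thesis using that L unfolding P_def by simp
  qed
  have X0C: "X0 ** C = mat 1" unfolding X0_def using HG G_def by (simp add: matrix_mul_assoc)
  have PX0: "P X0"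
    unfolding P_def
  proof (intro conjI)
    show "C ** X0 ** C = C" using X0C by (simp flip: matrix_mul_assoc)
    show "X0 ** C ** X0 = X0" using X0C by simp
    show "transpose (C ** X0) = C ** X0" unfolding X0_def
      by (simp add: matrix_transpose_mul HT matrix_mul_assoc)
    show "transpose (X0 ** C) = X0 ** C" using X0C by simp
  qed
  have uniq: "X = Y" if "P X" "P Y" for X Y
  proof -
    have XC: "X ** C = mat 1" and YC: "Y ** C = mat 1" using lc that by auto
    have PX: "transpose (C ** X) = C ** X" and PY: "transpose (C ** Y) = C ** Y"
      using that unfolding P_def by auto
    have e1: "C ** X = (C ** Y) ** (C ** X)"
      by (metis YC matrix_mul_assoc matrix_mul_lid)
    have e2: "C ** Y = (C ** X) ** (C ** Y)"
      by (metis XC matrix_mul_assoc matrix_mul_lid)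
    have "C ** X = transpose ((C ** Y) ** (C ** X))" using e1 PX by simp
    also have "\<dots> = (C ** X) ** (C ** Y)" using PX PY by (simp add: matrix_transpose_mul)
    also have "\<dots> = C ** Y" using e2 by simp
    finally have CXY: "C ** X = C ** Y" .
    have "X = (X ** C) ** X" using XC by simp
    also have "\<dots> = X ** (C ** Y)" using CXY by (metis matrix_mul_assoc)
    also have "\<dots> = Y" using XC by (simp add: matrix_mul_assoc)
    finally show ?thesis .
  qed
  have "P (moore_penrose C)"
    unfolding moore_penrose_def P_def[symmetric]
    by (rule theI[of P X0]) (use PX0 uniq in auto)
  then show ?thesis using lc by blast
qed

theorem theorem2:
  fixes N :: nat
    and B :: "real^'m^'n" and C :: "real^'n^'p" and x0 :: "real^'n"
    and r :: "nat \<Rightarrow> real^'p"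
    and l1 l2 l3 :: real
    and f1 :: "real^'n^'n \<Rightarrow> real" and f2 :: "(real^'m) list \<Rightarrow> real" and f3 :: "real \<Rightarrow> real"
    and S :: "((real^'n^'n) \<times> (real^'m) list \<times> real) set"
    and \<beta> \<omega>u :: real
    and As :: "real^'n^'n" and Us :: "(real^'m) list" and \<omega>s :: real
  assumes "N > 0"
    and "rank C = CARD('n)"
    and "r 0 = C *v x0"
    and "l1 \<ge> 0" and "l2 \<ge> 0" and "l3 \<ge> 0"
    and "\<beta> > 0" and "\<omega>u > 0"
    and "\<And>A U \<omega>. amopul_feasible N B C r S A U \<omega> \<Longrightarrow>
           spec_norm (C ** A ** moore_penrose C) \<le> \<beta> \<and> \<omega> \<le> \<omega>u"
    and "amopul_optimal N B C r S l1 l2 l3 f1 f2 f3 As Us \<omega>s"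
  shows "(\<Sum>t=1..N. norm (C *v traj As B Us x0 t - r t)) \<le> (\<Sum>i<N. \<beta> ^ i) * \<omega>u"
proof -
  note A = assms
  have feas: "amopul_feasible N B C r S As Us \<omega>s"
    using A(10) unfolding amopul_optimal_def by blast
  define K where "K = moore_penrose C"
  define M where "M = C ** As ** K"
  have KC: "K ** C = mat 1" unfolding K_def using mp_left_inv A(2) by blast
  have bnd: "spec_norm M \<le> \<beta>" and \<omega>le: "\<omega>s \<le> \<omega>u"
    using A(9)[OF feas] unfolding M_def K_def by auto
  have sumd: "(\<Sum>t=1..N. norm (M *v r (t-1) + (C ** B) *v (Us ! (t-1)) - r t)) \<le> \<omega>s"
    using feas unfolding amopul_feasible_def M_def K_def by blast
  have Mv: "norm (M *v v) \<le> \<beta> * norm v" for v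
  proof -
    have "bounded_linear (\<lambda>v. M *v v)"
      by (simp add: matrix_vector_mul_bounded_linear)
    then have "norm (M *v v) \<le> onorm (\<lambda>v. M *v v) * norm v" by (rule onorm)
    also have "\<dots> \<le> \<beta> * norm v" using bnd unfolding spec_norm_def
      by (intro mult_right_mono) auto
    finally show ?thesis .
  qed
  have CA: "C *v (As *v x) = M *v (C *v x)" for x
  proof -
    have "M *v (C *v x) = (C ** As ** (K ** C)) *v x"
      unfolding M_def by (simp add: matrix_vector_mul_assoc matrix_mul_assoc)
    then show ?thesis using KC by (simp add: matrix_vector_mul_assoc)
  qed
  define e where "e t = C *v traj As B Us x0 t - r t" for t
  define d where "d t = M *v r (t-1) + (C ** B) *v (Us ! (t-1)) - r t" for t
  have rec: "e (Suc t) = M *v e t + d (Suc t)" for t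
    unfolding e_def d_def
    by (simp add: CA matrix_vector_right_distrib matrix_vector_mult_diff_distrib
        matrix_vector_mul_assoc[symmetric] algebra_simps)
  have rec2: "\<forall>t. norm (e (Suc t)) \<le> \<beta> * norm (e t) + norm (d (Suc t))"
  proof
    fix t
    have "norm (e (Suc t)) \<le> norm (M *v e t) + norm (d (Suc t))"
      unfolding rec by (rule norm_triangle_ineq)
    then show "norm (e (Suc t)) \<le> \<beta> * norm (e t) + norm (d (Suc t))" using Mv[of "e t"] by linarith
  qed
  have e0: "e 0 = 0" unfolding e_def using A(3) by simp
  have "(\<Sum>t=1..N. norm (e t)) \<le> (\<Sum>i<N. \<beta>^i) * (\<beta> * norm (e 0) + (\<Sum>t=1..N. norm (d t)))"
    by (rule seq_bound[OF A(7) rec2]) simp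
  also have "\<dots> = (\<Sum>i<N. \<beta>^i) * (\<Sum>t=1..N. norm (d t))" using e0 by simp
  also have "\<dots> \<le> (\<Sum>i<N. \<beta>^i) * \<omega>u"
  proof (rule mult_left_mono)
    show "(\<Sum>t=1..N. norm (d t)) \<le> \<omega>u" using sumd \<omega>le unfolding d_def by linarith
    show "0 \<le> (\<Sum>i<N. \<beta>^i)" using A(7) by (simp add: sum_nonneg)
  qed
  finally show ?thesis unfolding e_def .
qed

end
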